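(* Let $\{(x_i,y_i)\}_{i=1}^n\subset\mathcal X\times\mathcal Y$ be a dataset, let $\alpha\in(0,1)$, and let $\mathcal F$ be a nonempty family of deterministic classifiers $F:\mathcal X\to\mathcal Y$. For $F\in\mathcal F$ define the empirical zero-one risk $$\hat{\mathcal R}(F)=\frac1n\sum_{i=1}^n \mathbf 1_{\{F(x_i)\neq y_i\}}$$ and the $\alpha$-CVaR zero-one loss $$\mathrm{CVaR}_\alpha(F)=\max_{w\in\Delta_n,\ w_i\le \frac{1}{\alpha n}\ \forall i}\ \sum_{i=1}^n w_i\,\mathbf 1_{\{F(x_i)\neq y_i\}},$$ where $\Delta_n=\{w\in\mathbb R^n: w_i\ge 0,\ \sum_i w_i=1\}$. Let $F^*_{\mathrm{ERM}}=\arg\min_{F\in\mathcal F}\hat{\mathcal R}(F)$ and $F^*_{\mathrm{CVaR}_\alpha}=\arg\min_{F\in\mathcal F}\mathrm{CVaR}_\alpha(F)$. Then for every $F\in\mathcal F$ and every $F^*\in F^*_{\mathrm{ERM}}$ we have $\mathrm{CVaR}_\alpha(F)\ge \mathrm{CVaR}_\alpha(F^* )$. Moreover, if $\min_{F\in\mathcal F}\hat{\mathcal R}(F)<\alpha$, then $F^*_{\mathrm{ERM}}=F^*_{\mathrm{CVaR}_\alpha}$.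
   Context: A deterministic classifier is a fixed map $F:\mathcal X\to\mathcal Y$. The zero-one loss is $\ell_{0/1}(\hat y,y)=\mathbf 1_{\{\hat y\neq y\}}$. *)

theory Defs
  imports Complex_Main
begin

text \<open>Dataset: points xs i, labels ys i for i < n (0-based indexing of the paper's i = 1..n).\<close>

definition zero_one_loss :: "'y \<Rightarrow> 'y \<Rightarrow> real" where
  "zero_one_loss yhat y = (if yhat \<noteq> y then 1 else 0)"

definition emp_risk :: "nat \<Rightarrow> (nat \<Rightarrow> 'x) \<Rightarrow> (nat \<Rightarrow> 'y) \<Rightarrow> ('x \<Rightarrow> 'y) \<Rightarrow> real" where
  "emp_risk n xs ys F = (\<Sum>i<n. zero_one_loss (F (xs i)) (ys i)) / real n"

definition cvar_weights :: "real \<Rightarrow> nat \<Rightarrow> (nat \<Rightarrow> real) set" where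
  "cvar_weights \<alpha> n = {w. (\<forall>i<n. 0 \<le> w i \<and> w i \<le> 1 / (\<alpha> * real n)) \<and> (\<Sum>i<n. w i) = 1}"

definition cvar :: "real \<Rightarrow> nat \<Rightarrow> (nat \<Rightarrow> 'x) \<Rightarrow> (nat \<Rightarrow> 'y) \<Rightarrow> ('x \<Rightarrow> 'y) \<Rightarrow> real" where
  "cvar \<alpha> n xs ys F =
     Sup ((\<lambda>w. \<Sum>i<n. w i * zero_one_loss (F (xs i)) (ys i)) ` cvar_weights \<alpha> n)"

definition argmin_set :: "('a \<Rightarrow> real) \<Rightarrow> 'a set \<Rightarrow> 'a set" where
  "argmin_set f A = {a \<in> A. \<forall>b\<in>A. f a \<le> f b}"

end

theory Submission
  imports Defs
begin

lemma sum_ind: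
  assumes "E \<subseteq> {..<(n::nat)}"
  shows "(\<Sum>i<n. w i * (if i \<in> E then 1 else 0)) = (\<Sum>i\<in>E. (w i::real))"
proof -
  have "(\<Sum>i<n. w i * (if i \<in> E then 1 else 0)) = (\<Sum>i\<in>{..<n} \<inter> E. w i)"
  proof -
    have "(\<Sum>i<n. w i * (if i \<in> E then 1 else 0)) = (\<Sum>i<n. if i \<in> E then w i else 0)"
      by (rule sum.cong) auto
    also have "\<dots> = (\<Sum>i\<in>{..<n} \<inter> E. w i)" by (rule sum.inter_restrict[symmetric]) auto
    finally show ?thesis .
  qed
  also have "{..<n} \<inter> E = E" using assms by blast
  finally show ?thesis .
qed

lemma key:
  fixes E :: "nat set" and n :: nat and \<alpha> :: real
  assumes E: "E \<subseteq> {..<n}" and n: "n \<ge> 1" and a0: "0 < \<alpha>" and a1: "\<alpha> < 1"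
  shows "Sup ((\<lambda>w. \<Sum>i<n. w i * (if i \<in> E then 1 else 0)) ` cvar_weights \<alpha> n)
         = min 1 (real (card E) / (\<alpha> * real n))"
proof -
  let ?M = "min 1 (real (card E) / (\<alpha> * real n))"
  let ?S = "(\<lambda>w. \<Sum>i<n. w i * (if i \<in> E then 1 else 0)) ` cvar_weights \<alpha> n"
  have finE: "finite E" using E finite_subset by blast
  have cardE: "card E \<le> n" using E card_mono[of "{..<n}" E] by simp
  have an: "\<alpha> * real n > 0" using n a0 by simp
  have ub: "x \<le> ?M" if xS: "x \<in> ?S" for x
  proof -
    obtain w where w: "w \<in> cvar_weights \<alpha> n" and x: "x = (\<Sum>i<n. w i * (if i \<in> E then 1 else 0))"
      using xS unfolding image_iff by blast
    have wb: "\<forall>i<n. 0 \<le> w i \<and> w i \<le> 1 / (\<alpha> * real n)" and ws: "(\<Sum>i<n. w i) = 1"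
      using w unfolding cvar_weights_def by auto
    have x': "x = (\<Sum>i\<in>E. w i)" using x sum_ind[OF E] by simp
    have "(\<Sum>i\<in>E. w i) \<le> (\<Sum>i<n. w i)"
      by (rule sum_mono2) (use E wb in auto)
    moreover have "(\<Sum>i\<in>E. w i) \<le> (\<Sum>i\<in>E. 1 / (\<alpha> * real n))"
      by (rule sum_mono) (use E wb in auto)
    ultimately show ?thesis using x' ws by simp
  qed
  have mem: "?M \<in> ?S"
  proof (cases "real (card E) / (\<alpha> * real n) \<le> 1")
    case True
    have kn: "card E < n"
    proof (rule ccontr)
      assume "\<not> card E < n"
      then have "card E = n" using cardE by simp
      then have "real (card E) / (\<alpha> * real n) = 1 / \<alpha>" using n by (simp add: field_simps)
      moreover have "1 / \<alpha> > 1" using a0 a1 by (simp add: field_simps)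
      ultimately show False using True by simp
    qed
    define c where "c = (1 - real (card E) / (\<alpha> * real n)) / (real n - real (card E))"
    define w where "w = (\<lambda>i. if i \<in> E then 1 / (\<alpha> * real n) else c)"
    have nk: "real n - real (card E) > 0" using kn by simp
    have c0: "c \<ge> 0" unfolding c_def using True nk by simp
    have c1: "c \<le> 1 / (\<alpha> * real n)"
    proof -
      have "1 - real (card E) / (\<alpha> * real n) = (\<alpha> * real n - real (card E)) / (\<alpha> * real n)"
        using an a0 n by (simp add: diff_divide_distrib)
      also have "\<dots> \<le> (real n - real (card E)) / (\<alpha> * real n)"
        using an a1 n by (intro divide_right_mono) (auto simp: mult_left_le_one_le)
      finally have "1 - real (card E) / (\<alpha> * real n) \<le> (real n - real (card E)) / (\<alpha> * real n)" .
      then show ?thesis unfolding c_def using nk an by (simp add: divide_le_eq field_simps)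
    qed
    have sumw: "(\<Sum>i<n. w i) = 1"
    proof -
      have "(\<Sum>i<n. w i) = (\<Sum>i\<in>E. w i) + (\<Sum>i\<in>{..<n} - E. w i)"
        using E by (metis finite_lessThan sum.subset_diff add.commute)
      also have "(\<Sum>i\<in>E. w i) = real (card E) / (\<alpha> * real n)" unfolding w_def by simp
      also have "(\<Sum>i\<in>{..<n} - E. w i) = (real n - real (card E)) * c"
        using E finE unfolding w_def by (simp add: card_Diff_subset of_nat_diff cardE)
      also have "(real n - real (card E)) * c = 1 - real (card E) / (\<alpha> * real n)"
        unfolding c_def using nk by simp
      finally show ?thesis by simp
    qed
    have "w \<in> cvar_weights \<alpha> n" unfolding cvar_weights_def using sumw c0 c1 an
      by (auto simp: w_def)
    moreover have "(\<Sum>i<n. w i * (if i \<in> E then 1 else 0)) = ?M"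
      using sum_ind[OF E] True unfolding w_def by simp
    ultimately show ?thesis by (metis (no_types, lifting) image_eqI)
  next
    case False
    have kpos: "card E > 0" using False by (metis of_nat_0 div_0 zero_le_one card_gt_0_iff gr0I)
    have big: "\<alpha> * real n < real (card E)" using False an by (simp add: field_simps)
    define w where "w = (\<lambda>i. if i \<in> E then 1 / real (card E) else 0)"
    have sumw: "(\<Sum>i<n. w i) = 1"
    proof -
      have "(\<Sum>i<n. w i) = (\<Sum>i\<in>E. w i) + (\<Sum>i\<in>{..<n} - E. w i)"
        using E by (metis finite_lessThan sum.subset_diff add.commute)
      also have "(\<Sum>i\<in>E. w i) = 1" unfolding w_def using kpos by simp
      also have "(\<Sum>i\<in>{..<n} - E. w i) = 0" unfolding w_def by simp
      finally show ?thesis by simp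
    qed
    have "1 / real (card E) \<le> 1 / (\<alpha> * real n)"
      using big an by (simp add: frac_le)
    then have "w \<in> cvar_weights \<alpha> n" unfolding cvar_weights_def using sumw an
      by (auto simp: w_def)
    moreover have "(\<Sum>i<n. w i * (if i \<in> E then 1 else 0)) = ?M"
      using sum_ind[OF E] False kpos unfolding w_def by simp
    ultimately show ?thesis by (metis (no_types, lifting) image_eqI)
  qed
  show ?thesis by (rule cSup_eq_maximum[OF mem]) (use ub in blast)
qed

lemma cvar_eq:
  fixes \<alpha> :: real
  assumes n: "n \<ge> 1" and a0: "0 < \<alpha>" and a1: "\<alpha> < 1"
  shows "cvar \<alpha> n xs ys F = min 1 (emp_risk n xs ys F / \<alpha>)"
proof -
  define E where "E = {i. i < n \<and> F (xs i) \<noteq> ys i}"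
  have E: "E \<subseteq> {..<n}" unfolding E_def by auto
  have l: "\<And>i. i \<in> {..<n} \<Longrightarrow> zero_one_loss (F (xs i)) (ys i) = (if i \<in> E then 1 else 0)"
    unfolding E_def zero_one_loss_def by auto
  have "cvar \<alpha> n xs ys F = Sup ((\<lambda>w. \<Sum>i<n. w i * (if i \<in> E then 1 else 0)) ` cvar_weights \<alpha> n)"
    unfolding cvar_def by (intro arg_cong[where f=Sup] image_cong refl sum.cong) (auto simp: l)
  also have "\<dots> = min 1 (real (card E) / (\<alpha> * real n))" by (rule key[OF E n a0 a1])
  also have "emp_risk n xs ys F = real (card E) / real n"
  proof -
    have "(\<Sum>i<n. zero_one_loss (F (xs i)) (ys i)) = (\<Sum>i<n. 1 * (if i \<in> E then 1 else 0))"
      by (rule sum.cong) (auto simp: l)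
    also have "\<dots> = (\<Sum>i\<in>E. 1)" by (rule sum_ind[OF E])
    finally show ?thesis unfolding emp_risk_def by simp
  qed
  ultimately show ?thesis by (simp add: field_simps)
qed

theorem proposition1:
  fixes n :: nat and xs :: "nat \<Rightarrow> 'x" and ys :: "nat \<Rightarrow> 'y"
    and \<alpha> :: real and \<F> :: "('x \<Rightarrow> 'y) set"
  assumes "n \<ge> 1" and "0 < \<alpha>" and "\<alpha> < 1" and "\<F> \<noteq> {}"
  shows "(\<forall>F\<in>\<F>. \<forall>Fs\<in>argmin_set (emp_risk n xs ys) \<F>.
            cvar \<alpha> n xs ys F \<ge> cvar \<alpha> n xs ys Fs) \<and>
         ((INF F\<in>\<F>. emp_risk n xs ys F) < \<alpha> \<longrightarrow>
           argmin_set (emp_risk n xs ys) \<F> = argmin_set (cvar \<alpha> n xs ys) \<F>)"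
proof -
  let ?R = "emp_risk n xs ys"
  have C: "\<And>F. cvar \<alpha> n xs ys F = min 1 (?R F / \<alpha>)" using cvar_eq assms by blast
  have mono: "\<And>a b. a \<le> b \<Longrightarrow> min 1 (a / \<alpha>) \<le> min 1 (b / \<alpha>)"
    using assms(2) by (simp add: divide_right_mono min.coboundedI2 min_le_iff_disj)
  have P1: "\<forall>F\<in>\<F>. \<forall>Fs\<in>argmin_set ?R \<F>. cvar \<alpha> n xs ys F \<ge> cvar \<alpha> n xs ys Fs"
    unfolding argmin_set_def C using mono by blast
  have P2: "argmin_set ?R \<F> = argmin_set (cvar \<alpha> n xs ys) \<F>" if inf: "(INF F\<in>\<F>. ?R F) < \<alpha>"
  proof -
    have bdd: "bdd_below (?R ` \<F>)"
      by (rule bdd_belowI[where m=0]) (auto simp: emp_risk_def zero_one_loss_def intro!: sum_nonneg divide_nonneg_nonneg)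
    obtain F0 where F0: "F0 \<in> \<F>" "?R F0 < \<alpha>"
      using cInf_lessD[of "?R ` \<F>" \<alpha>] inf assms(4) by auto
    have lt: "\<And>a. a < \<alpha> \<Longrightarrow> a / \<alpha> < 1" using assms(2) by (simp add: divide_less_eq)
    show ?thesis
    proof
      show "argmin_set ?R \<F> \<subseteq> argmin_set (cvar \<alpha> n xs ys) \<F>"
        unfolding argmin_set_def C using mono by blast
    next
      show "argmin_set (cvar \<alpha> n xs ys) \<F> \<subseteq> argmin_set ?R \<F>"
      proof
        fix Fs assume "Fs \<in> argmin_set (cvar \<alpha> n xs ys) \<F>"
        then have Fs: "Fs \<in> \<F>" "\<And>F. F \<in> \<F> \<Longrightarrow> min 1 (?R Fs / \<alpha>) \<le> min 1 (?R F / \<alpha>)"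
          unfolding argmin_set_def C by auto
        have "min 1 (?R Fs / \<alpha>) \<le> ?R F0 / \<alpha>" using Fs(2)[OF F0(1)] by simp
        then have s: "?R Fs / \<alpha> < 1" using lt[OF F0(2)] by linarith
        have "?R Fs \<le> ?R F" if "F \<in> \<F>" for F
        proof (rule ccontr)
          assume "\<not> ?R Fs \<le> ?R F"
          then have "?R F / \<alpha> < ?R Fs / \<alpha>" using assms(2) by (simp add: divide_strict_right_mono)
          then show False using Fs(2)[OF that] s by linarith
        qed
        then show "Fs \<in> argmin_set ?R \<F>" unfolding argmin_set_def using Fs(1) by blast
      qed
    qed
  qed
  show ?thesis using P1 P2 by blast
qed

end
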